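(* Let ${\bf i}=(i_n)_{n\ge1}\in\{0,1\}^{\mathbb{N}}$ and define $g_{\bf i}(x)=(1-x)\sum_{n=1}^\infty i_nx^{n-1}$ for $x\in(0,1)$. Then for every integer $k\ge2$ and every $x\in[1-\frac1k,1-\frac1{k+1})$, $|g_{\bf i}'(x)|\le kx^{k-1}$. *)

theory Defs
  imports "HOL-Analysis.Analysis"
begin

definition g_seq :: "(nat \<Rightarrow> nat) \<Rightarrow> real \<Rightarrow> real" where
  "g_seq i x = (1 - x) * (\<Sum>n. real (i (Suc n)) * x ^ n)"

end

theory Submission
  imports Defs
begin

theorem lemma5p3:
  fixes i :: "nat \<Rightarrow> nat" and k :: nat and x :: real
  assumes "\<forall>n\<ge>1. i n \<in> {0, 1}"
    and "k \<ge> 2"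
    and "1 - 1 / real k \<le> x" and "x < 1 - 1 / real (k + 1)"
  shows "g_seq i differentiable (at x) \<and> \<bar>deriv (g_seq i) x\<bar> \<le> real k * x ^ (k - 1)"
proof -
  define a where "a n = real (i (Suc n))" for n
  have a01: "a n = 0 \<or> a n = 1" for n using assms(1) by (auto simp: a_def)
  have ak: "real k \<ge> 2" using assms(2) by simp
  have "1 / real k \<le> 1/2" using ak by (simp add: field_simps)
  hence x0: "x > 0" using assms(3) by linarith
  have "1 / real (k + 1) > 0" by simp
  hence x1: "x < 1" using assms(4) by linarith
  define f where "f y = (\<Sum>n. a n * y ^ n)" for y :: real
  have g_eq: "g_seq i = (\<lambda>y. (1 - y) * f y)"
    by (rule ext) (simp add: g_seq_def f_def a_def)
  have sm: "summable (\<lambda>n. a n * z ^ n)" if "norm z < 1" for z :: real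
  proof (rule summable_comparison_test[where g = "\<lambda>n. norm z ^ n"])
    show "\<exists>N. \<forall>n\<ge>N. norm (a n * z ^ n) \<le> norm z ^ n"
    proof (intro exI allI impI)
      fix n :: nat
      have "norm (a n * z ^ n) = \<bar>a n\<bar> * norm z ^ n" by (simp add: abs_mult power_abs)
      also have "\<dots> \<le> 1 * norm z ^ n" using a01[of n] by (intro mult_right_mono) auto
      finally show "norm (a n * z ^ n) \<le> norm z ^ n" by simp
    qed
    show "summable (\<lambda>n. norm z ^ n)" using that by (simp add: summable_geometric)
  qed
  have xn: "norm x < 1" using x0 x1 by simp
  define F' where "F' = (\<Sum>n. diffs a n * x ^ n)"
  have df: "(f has_field_derivative F') (at x)"
    unfolding f_def F'_def using termdiffs_strong'[of 1 a x] sm xn by blast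
  define D where "D = (1 - x) * F' - f x"
  have dg: "(g_seq i has_field_derivative D) (at x)"
    unfolding g_eq D_def
    using DERIV_mult[OF DERIV_diff[OF DERIV_const[of 1] DERIV_ident] df]
    by (simp add: algebra_simps)
  have diffb: "g_seq i differentiable (at x)"
    using dg by (meson field_differentiable_def field_differentiable_imp_differentiable)
  have derivD: "deriv (g_seq i) x = D" using dg by (rule DERIV_imp_deriv)
  define d where "d n = real n * x ^ (n - 1)" for n
  define c where "c n = d n - d (Suc n)" for n
  have s1: "(\<lambda>n. a n * x ^ n) sums f x" unfolding f_def using sm[OF xn] by (rule summable_sums)
  have s2: "(\<lambda>n. diffs a n * x ^ n) sums F'" unfolding F'_def
    using termdiff_converges[OF xn sm] by (rule summable_sums)
  have s3: "(\<lambda>n. a (Suc n) * x ^ Suc n) sums (f x - a 0)"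
    using s1 sums_Suc_iff[of "\<lambda>n. a n * x ^ n" "f x - a 0"] by simp
  have s4: "(\<lambda>n. (1 - x) * (diffs a n * x ^ n) - a (Suc n) * x ^ Suc n) sums ((1 - x) * F' - (f x - a 0))"
    by (intro sums_diff sums_mult s2 s3)
  have eqs: "(1 - x) * (diffs a n * x ^ n) - a (Suc n) * x ^ Suc n = a (Suc n) * c (Suc n)" for n
    by (simp add: c_def d_def diffs_def algebra_simps)
  have "(\<lambda>n. a (Suc n) * c (Suc n)) sums ((1 - x) * F' - (f x - a 0))"
    using s4 eqs by simp
  hence se: "(\<lambda>n. a n * c n) sums D"
    using sums_Suc_iff[of "\<lambda>n. a n * c n" "(1 - x) * F' - (f x - a 0)"]
    by (simp add: D_def c_def d_def)
  have cneg: "c n \<le> 0" if "n < k" for n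
  proof (cases n)
    case 0 thus ?thesis by (simp add: c_def d_def)
  next
    case (Suc m)
    have "real n * (1 - x) \<le> (real k - 1) * (1 / real k)"
    proof (rule mult_mono)
      show "real n \<le> real k - 1" using that by simp
      show "1 - x \<le> 1 / real k" using assms(3) by simp
    qed (use ak x1 in auto)
    also have "\<dots> = 1 - 1 / real k" using ak by (simp add: field_simps)
    finally have "real n \<le> (real n + 1) * x" using assms(3) by (simp add: algebra_simps)
    hence "x ^ m * real n \<le> x ^ m * ((real n + 1) * x)" using x0 by (simp add: mult_left_mono)
    thus ?thesis using Suc by (simp add: c_def d_def algebra_simps)
  qed
  have cpos: "c n \<ge> 0" if nk: "n \<ge> k" for n
  proof -
    have "n \<noteq> 0" using nk assms(2) by linarith
    then obtain m where m: "n = Suc m" by (cases n) auto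
    have "1 / real (k + 1) < 1 - x" using assms(4) by simp
    hence "real k * (1 / real (k+1)) \<le> real n * (1 - x)"
      using that x1 by (intro mult_mono) auto
    moreover have "real k * (1 / real (k+1)) = 1 - 1 / real (k + 1)" by (simp add: field_simps)
    ultimately have "(real n + 1) * x \<le> real n" using assms(4) by (simp add: algebra_simps)
    hence "x ^ m * ((real n + 1) * x) \<le> x ^ m * real n" using x0 by (simp add: mult_left_mono)
    thus ?thesis using m by (simp add: c_def d_def algebra_simps)
  qed
  have dlim: "d \<longlonglongrightarrow> 0"
  proof -
    have "(\<lambda>n. real n * x ^ n + x ^ n) \<longlonglongrightarrow> 0 + 0"
      by (intro tendsto_add powser_times_n_limit_0 LIMSEQ_power_zero) (use xn x0 in auto)
    hence "(\<lambda>n. d (Suc n)) \<longlonglongrightarrow> 0" by (simp add: d_def algebra_simps)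
    thus ?thesis by (rule LIMSEQ_imp_Suc)
  qed
  have ctail: "(\<lambda>n. c (n + k)) sums d k"
  proof -
    have "(\<lambda>n. d (n + k)) \<longlonglongrightarrow> 0" using dlim by (rule LIMSEQ_ignore_initial_segment[where k=k, simplified])
    from telescope_sums'[OF this] show ?thesis by (simp add: c_def)
  qed
  have summ: "summable (\<lambda>n. a n * c n)" using se by (rule sums_summable)
  have split: "D = (\<Sum>n. a (n + k) * c (n + k)) + (\<Sum>n<k. a n * c n)"
    using suminf_split_initial_segment[OF summ, of k] se sums_unique by metis
  have le1: "a (n + k) * c (n + k) \<le> c (n + k)" for n
    using a01[of "n+k"] cpos[of "n+k"] by auto
  have T1: "(\<Sum>n. a (n + k) * c (n + k)) \<le> d k"
  proof -
    have "(\<Sum>n. a (n + k) * c (n + k)) \<le> (\<Sum>n. c (n + k))"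
      by (rule suminf_le[OF le1 summable_ignore_initial_segment[OF summ, of k] sums_summable[OF ctail]])
    thus ?thesis using sums_unique[OF ctail] by simp
  qed
  have T2: "0 \<le> (\<Sum>n. a (n + k) * c (n + k))"
    using suminf_nonneg[OF summable_ignore_initial_segment[OF summ, of k]] a01 cpos
    by (metis le_add2 mult_nonneg_nonneg order_refl zero_less_one_class.zero_le_one)
  have S1: "(\<Sum>n<k. a n * c n) \<le> 0"
  proof (rule sum_nonpos)
    fix n assume "n \<in> {..<k}"
    thus "a n * c n \<le> 0" using a01[of n] cneg[of n] by auto
  qed
  have S2: "(\<Sum>n<k. c n) \<le> (\<Sum>n<k. a n * c n)"
  proof (rule sum_mono)
    fix n assume "n \<in> {..<k}"
    thus "c n \<le> a n * c n" using a01[of n] cneg[of n] by auto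
  qed
  have S3: "(\<Sum>n<k. c n) = - d k"
    unfolding c_def by (subst sum_lessThan_telescope') (simp add: d_def)
  have "\<bar>D\<bar> \<le> d k" using split T1 T2 S1 S2 S3 by linarith
  thus ?thesis using diffb derivD by (simp add: d_def)
qed

end
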